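(* Let $n\ge1$ and $1\le k\le n$. The reverse-admissible $k\times k$ minors $(I_2,I_1)$ are in a weight preserving bijection with the single column symplectic PBW tableaux of length $k$.
   Context: Let $\bar i:=2n+1-i$ and $\mathcal N=\{1<\dots<n<\bar n<\dots<\bar1\}$; $\varepsilon_1,\dots,\varepsilon_n$ is the standard basis of the dual Cartan of $\mathfrak{sp}_{2n}$. A $k\times k$ minor is a pair $(I_2,I_1)$ of subsets of $\{1,\dots,n\}$ with $|I_1|+|I_2|=k$; its entries are the elements $i\in I_1$ and $\bar i$ for $i\in I_2$, and its weight is $\sum_{i\in I_1}\varepsilon_i-\sum_{i\in I_2}\varepsilon_i$. With $\Gamma=I_1\cap I_2=\{\gamma_1<\dots<\gamma_\lambda\}$, the minor is reverse-admissible if there is $T=\{\tau_1<\dots<\tau_\lambda\}\subset\{1,\dots,n\}\setminus(I_1\cup I_2)$ with $|T|=|\Gamma|$ and $\tau_i\le\gamma_i$ for all $i$. A single column symplectic PBW tableau of length $k$ is a column of $k$ boxes with entries $T_1,\dots,T_k\in\mathcal N$ (top to bottom) such that: (i) if $T_i\le k$ then $T_i=i$; (ii) if $i_1<i_2$ and $T_{i_1}\ne i_1$ then $T_{i_1}>T_{i_2}$; (iii) if $T_i=i$ and $T_{i'}=\bar i$ for some $i'$, then $i'<i$, whenever $i<k$. Its weight is $\sum_{i\le n\text{ appearing}}\varepsilon_i-\sum_{j\le n:\ \bar j\text{ appearing}}\varepsilon_j$. *)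

theory Defs
  imports Main
begin

text \<open>The ordered alphabet N = {1 < ... < n < bar n < ... < bar 1} is encoded as the
naturals {1..2n} with their usual order, where bar i = 2n+1-i.\<close>

definition bar :: "nat \<Rightarrow> nat \<Rightarrow> nat" where
  "bar n i = 2*n + 1 - i"

text \<open>Weights are functions nat => int: the coefficient of epsilon_j for j in {1..n},
and 0 elsewhere.\<close>

definition minors :: "nat \<Rightarrow> nat \<Rightarrow> (nat set \<times> nat set) set" where
  "minors n k = {(I2, I1). I1 \<subseteq> {1..n} \<and> I2 \<subseteq> {1..n} \<and> card I1 + card I2 = k}"

definition minor_weight :: "nat \<Rightarrow> nat set \<times> nat set \<Rightarrow> nat \<Rightarrow> int" where
  "minor_weight n M j = (case M of (I2, I1) \<Rightarrow>
     (if j \<in> {1..n} then (if j \<in> I1 then 1 else 0) - (if j \<in> I2 then 1 else 0) else 0))"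

definition reverse_admissible :: "nat \<Rightarrow> nat set \<times> nat set \<Rightarrow> bool" where
  "reverse_admissible n M = (case M of (I2, I1) \<Rightarrow>
     (let \<Gamma> = I1 \<inter> I2 in
      \<exists>T. T \<subseteq> {1..n} - (I1 \<union> I2) \<and> card T = card \<Gamma> \<and>
          (\<forall>i < card \<Gamma>. sorted_list_of_set T ! i \<le> sorted_list_of_set \<Gamma> ! i)))"

definition rev_adm_minors :: "nat \<Rightarrow> nat \<Rightarrow> (nat set \<times> nat set) set" where
  "rev_adm_minors n k = {M \<in> minors n k. reverse_admissible n M}"

text \<open>A single column of length k is a list of length k; the entry T_i (1-based, top to
bottom) is the list element at position i-1.\<close>
definition pbw_column :: "nat \<Rightarrow> nat \<Rightarrow> nat list \<Rightarrow> bool" where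
  "pbw_column n k T \<longleftrightarrow>
     length T = k \<and>
     (\<forall>i\<in>{1..k}. T ! (i - 1) \<in> {1..2*n}) \<and>
     (\<forall>i\<in>{1..k}. T ! (i - 1) \<le> k \<longrightarrow> T ! (i - 1) = i) \<and>
     (\<forall>i1\<in>{1..k}. \<forall>i2\<in>{1..k}. i1 < i2 \<and> T ! (i1 - 1) \<noteq> i1 \<longrightarrow> T ! (i1 - 1) > T ! (i2 - 1)) \<and>
     (\<forall>i\<in>{1..k}. \<forall>i'\<in>{1..k}. i < k \<and> T ! (i - 1) = i \<and> T ! (i' - 1) = bar n i \<longrightarrow> i' < i)"

definition pbw_columns :: "nat \<Rightarrow> nat \<Rightarrow> nat list set" where
  "pbw_columns n k = {T. pbw_column n k T}"

definition column_weight :: "nat \<Rightarrow> nat list \<Rightarrow> nat \<Rightarrow> int" where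
  "column_weight n T j =
     (if j \<in> {1..n} then (if j \<in> set T then 1 else 0) - (if bar n j \<in> set T then 1 else 0) else 0)"

end

theory Submission
  imports Defs
begin



lemma take_lt_set:
  fixes xs :: "nat list"
  assumes "sorted_wrt (<) xs" "j < length xs"
  shows "{x \<in> set xs. x < xs ! j} = set (take j xs)"
proof -
  have "x \<in> set (take j xs) \<longleftrightarrow> x \<in> set xs \<and> x < xs ! j" for x
  proof
    assume "x \<in> set (take j xs)"
    then obtain i where "i < j" "x = xs ! i" using assms(2)
      by (auto simp: in_set_conv_nth)
    then show "x \<in> set xs \<and> x < xs ! j" using assms
      by (metis sorted_wrt_nth_less nth_mem order.strict_trans)
  next
    assume "x \<in> set xs \<and> x < xs ! j"
    then obtain i where i: "i < length xs" "x = xs ! i" "x < xs ! j"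
      by (auto simp: in_set_conv_nth)
    have "i < j"
    proof (rule ccontr)
      assume "\<not> i < j"
      then have "i = j \<or> j < i" by auto
      then show False using i assms
        by (metis sorted_wrt_nth_less less_asym less_irrefl)
    qed
    then show "x \<in> set (take j xs)" using i
      by (metis in_set_conv_nth length_take min_less_iff_conj nth_take)
  qed
  then show ?thesis by auto
qed

lemma take_le_set:
  fixes xs :: "nat list"
  assumes "sorted_wrt (<) xs" "j < length xs"
  shows "{x \<in> set xs. x \<le> xs ! j} = set (take (Suc j) xs)"
proof -
  have "{x \<in> set xs. x \<le> xs ! j} = insert (xs ! j) {x \<in> set xs. x < xs ! j}"
    using assms(2) by auto
  also have "\<dots> = insert (xs ! j) (set (take j xs))" using take_lt_set[OF assms] by simp
  also have "\<dots> = set (take (Suc j) xs)" using assms(2)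
    by (simp add: take_Suc_conv_app_nth)
  finally show ?thesis .
qed

lemma card_le_nth:
  assumes "finite (A::nat set)" "j < card A"
  shows "card {x \<in> A. x \<le> sorted_list_of_set A ! j} = Suc j"
proof -
  let ?xs = "sorted_list_of_set A"
  have "{x \<in> A. x \<le> ?xs ! j} = set (take (Suc j) ?xs)"
    using take_le_set[of ?xs j] assms by simp
  moreover have d: "distinct (take (Suc j) ?xs)" by simp
  moreover have "length (take (Suc j) ?xs) = Suc j" using assms by simp
  ultimately show ?thesis using distinct_card[OF d] by simp
qed

lemma nth_le_iff:
  assumes "finite (A::nat set)" "j < card A"
  shows "sorted_list_of_set A ! j \<le> g \<longleftrightarrow> j < card {x \<in> A. x \<le> g}"
proof
  let ?xs = "sorted_list_of_set A"
  assume "?xs ! j \<le> g"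
  then have "{x \<in> A. x \<le> ?xs ! j} \<subseteq> {x \<in> A. x \<le> g}" by auto
  then have "card {x \<in> A. x \<le> ?xs ! j} \<le> card {x \<in> A. x \<le> g}"
    using assms by (intro card_mono) auto
  then show "j < card {x \<in> A. x \<le> g}" using card_le_nth[OF assms] by simp
next
  let ?xs = "sorted_list_of_set A"
  assume h: "j < card {x \<in> A. x \<le> g}"
  show "?xs ! j \<le> g"
  proof (rule ccontr)
    assume "\<not> ?xs ! j \<le> g"
    then have "{x \<in> A. x \<le> g} \<subseteq> {x \<in> set ?xs. x < ?xs ! j}" using assms by auto
    also have "\<dots> = set (take j ?xs)" using take_lt_set[of ?xs j] assms by simp
    finally have "card {x \<in> A. x \<le> g} \<le> card (set (take j ?xs))" by (intro card_mono) auto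
    also have "\<dots> \<le> j" by (metis card_length length_take min.bounded_iff order_refl)
    finally show False using h by simp
  qed
qed




lemma RA_iff:
  fixes I1 I2 :: "nat set"
  assumes I: "I1 \<subseteq> {1..n}" "I2 \<subseteq> {1..n}"
  defines "G \<equiv> I1 \<inter> I2" and "F \<equiv> {1..n} - (I1 \<union> I2)"
  shows "reverse_admissible n (I2, I1) \<longleftrightarrow>
         (\<forall>g\<in>G. card {x \<in> G. x \<le> g} \<le> card {x \<in> F. x \<le> g})"
proof -
  have fG: "finite G" using I unfolding G_def by (meson finite_Int finite_atLeastAtMost finite_subset)
  have fF: "finite F" unfolding F_def by simp
  show ?thesis
  proof
    assume "reverse_admissible n (I2, I1)"
    then obtain T where T: "T \<subseteq> F" "card T = card G"
      "\<forall>i < card G. sorted_list_of_set T ! i \<le> sorted_list_of_set G ! i"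
      unfolding reverse_admissible_def G_def F_def Let_def by auto
    have fT: "finite T" using T(1) fF finite_subset by blast
    show "\<forall>g\<in>G. card {x \<in> G. x \<le> g} \<le> card {x \<in> F. x \<le> g}"
    proof
      fix g assume "g \<in> G"
      then obtain j where j: "j < card G" "g = sorted_list_of_set G ! j"
        using fG by (metis in_set_conv_nth length_sorted_list_of_set set_sorted_list_of_set)
      have "card {x \<in> G. x \<le> g} = Suc j" using card_le_nth[OF fG j(1)] j(2) by simp
      moreover have "j < card {x \<in> T. x \<le> g}"
        using nth_le_iff[OF fT, of j g] T j by simp
      moreover have "card {x \<in> T. x \<le> g} \<le> card {x \<in> F. x \<le> g}"
        using T(1) fF by (intro card_mono) auto
      ultimately show "card {x \<in> G. x \<le> g} \<le> card {x \<in> F. x \<le> g}" by simp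
    qed
  next
    assume H: "\<forall>g\<in>G. card {x \<in> G. x \<le> g} \<le> card {x \<in> F. x \<le> g}"
    let ?m = "card G"
    let ?Fs = "sorted_list_of_set F"
    have mF: "?m \<le> card F"
    proof (cases "G = {}")
      case True then show ?thesis by simp
    next
      case False
      let ?g = "Max G"
      have "?g \<in> G" using False fG by simp
      have "{x \<in> G. x \<le> ?g} = G" using fG by auto
      then have "?m \<le> card {x \<in> F. x \<le> ?g}" using H \<open>?g \<in> G\<close> by metis
      also have "\<dots> \<le> card F" using fF by (intro card_mono) auto
      finally show ?thesis .
    qed
    define T where "T = set (take ?m ?Fs)"
    have dT: "distinct (take ?m ?Fs)" by simp
    have sT: "sorted (take ?m ?Fs)" by (metis sorted_sorted_list_of_set sorted_wrt_take)
    have Ts: "sorted_list_of_set T = take ?m ?Fs"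
      unfolding T_def using dT sT sorted_list_of_set.idem_if_sorted_distinct by blast
    have TF: "T \<subseteq> F" unfolding T_def using fF
      by (metis set_sorted_list_of_set set_take_subset)
    have cT: "card T = ?m" unfolding T_def using dT mF
      by (simp add: distinct_card)
    have "\<forall>i < ?m. sorted_list_of_set T ! i \<le> sorted_list_of_set G ! i"
    proof (intro allI impI)
      fix i assume i: "i < ?m"
      let ?g = "sorted_list_of_set G ! i"
      have "?g \<in> G" using i fG
        by (metis length_sorted_list_of_set nth_mem set_sorted_list_of_set)
      then have "Suc i \<le> card {x \<in> F. x \<le> ?g}" using H card_le_nth[OF fG i] by metis
      then have "?Fs ! i \<le> ?g" using nth_le_iff[OF fF, of i ?g] i mF by simp
      then show "sorted_list_of_set T ! i \<le> ?g" using Ts i by simp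
    qed
    then show "reverse_admissible n (I2, I1)"
      unfolding reverse_admissible_def Let_def
      using TF cT unfolding G_def F_def by blast
  qed
qed




definition goodS :: "nat \<Rightarrow> nat \<Rightarrow> nat set \<Rightarrow> bool" where
  "goodS n k S \<longleftrightarrow> S \<subseteq> {1..2*n} \<and> card S = k \<and>
     (\<forall>i\<in>{1..<k}. i \<in> S \<and> bar n i \<in> S \<longrightarrow>
        card {x \<in> S. bar n i < x} < card {q \<in> {1..<i}. q \<notin> S})"

lemma col_len: "pbw_column n k T \<Longrightarrow> length T = k"
  by (simp add: pbw_column_def)

lemma col_set_nth: "pbw_column n k T \<Longrightarrow> x \<in> set T \<longleftrightarrow> (\<exists>p\<in>{1..k}. x = T ! (p - 1))"
  unfolding pbw_column_def in_set_conv_nth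
  by (metis Suc_leI atLeastAtMost_iff diff_Suc_1 diff_less le_eq_less_or_eq nat_le_linear
       not_less_eq_eq zero_less_Suc Suc_pred not_less0 One_nat_def less_one)

lemma col_fix:
  assumes "pbw_column n k T" "q \<in> {1..k}"
  shows "q \<in> set T \<longleftrightarrow> T ! (q - 1) = q"
proof
  assume "q \<in> set T"
  then obtain r where "r \<in> {1..k}" "q = T ! (r - 1)" using col_set_nth[OF assms(1)] by blast
  then show "T ! (q - 1) = q" using assms unfolding pbw_column_def by auto
next
  assume "T ! (q - 1) = q"
  then show "q \<in> set T" using col_set_nth[OF assms(1)] assms(2) by metis
qed

lemma col_big:
  assumes "pbw_column n k T" "p \<in> {1..k}" "T ! (p - 1) \<noteq> p"
  shows "k < T ! (p - 1)"
  using assms unfolding pbw_column_def by (meson not_less)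

lemma col_dec:
  assumes "pbw_column n k T" "p1 \<in> {1..k}" "p2 \<in> {1..k}" "p1 < p2" "T ! (p1 - 1) \<noteq> p1"
  shows "T ! (p2 - 1) < T ! (p1 - 1)"
  using assms unfolding pbw_column_def by blast

lemma col_inj:
  assumes "pbw_column n k T" "p1 \<in> {1..k}" "p2 \<in> {1..k}" "T ! (p1 - 1) = T ! (p2 - 1)"
  shows "p1 = p2"
proof (rule ccontr)
  assume ne: "p1 \<noteq> p2"
  have *: False if "a \<in> {1..k}" "b \<in> {1..k}" "a < b" "T ! (a - 1) = T ! (b - 1)" for a b
  proof (cases "T ! (a - 1) = a")
    case True
    then have "T ! (b - 1) \<le> k" using that by auto
    then have "T ! (b - 1) = b" using assms(1) that unfolding pbw_column_def by auto
    then show False using True that by auto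
  next
    case False
    then show False using col_dec[OF assms(1) that(1,2,3)] that by auto
  qed
  show False using ne assms * by (metis linorder_neqE_nat)
qed

lemma col_distinct:
  assumes "pbw_column n k T" shows "distinct T"
proof -
  have "\<forall>i<length T. \<forall>j<length T. i \<noteq> j \<longrightarrow> T ! i \<noteq> T ! j"
  proof (intro allI impI)
    fix i j assume "i < length T" "j < length T" "i \<noteq> j"
    then show "T ! i \<noteq> T ! j" using col_inj[OF assms, of "Suc i" "Suc j"] col_len[OF assms] by auto
  qed
  then show ?thesis by (simp add: distinct_conv_nth)
qed

lemma col_count:
  assumes C: "pbw_column n k T" and p: "p \<in> {1..k}" "T ! (p - 1) \<noteq> p"
  shows "card {x \<in> set T. T ! (p - 1) < x} = card {q \<in> {1..<p}. q \<notin> set T}"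
proof -
  let ?f = "\<lambda>q. T ! (q - 1)"
  have big: "k < T ! (p - 1)" using col_big[OF C p] .
  have eq: "{x \<in> set T. T ! (p - 1) < x} = ?f ` {q \<in> {1..<p}. q \<notin> set T}"
  proof
    show "{x \<in> set T. T ! (p - 1) < x} \<subseteq> ?f ` {q \<in> {1..<p}. q \<notin> set T}"
    proof
      fix x assume x: "x \<in> {x \<in> set T. T ! (p - 1) < x}"
      then obtain r where r: "r \<in> {1..k}" "x = T ! (r - 1)" using col_set_nth[OF C] by blast
      have "r < p"
      proof (rule ccontr)
        assume "\<not> r < p"
        then have "r = p \<or> p < r" by auto
        then show False using col_dec[OF C p(1) r(1) _ p(2)] x r by auto
      qed
      moreover have "r \<notin> set T"
      proof
        assume "r \<in> set T"
        then have "T ! (r - 1) = r" using col_fix[OF C r(1)] by simp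
        then show False using x r big by auto
      qed
      ultimately show "x \<in> ?f ` {q \<in> {1..<p}. q \<notin> set T}" using r by auto
    qed
  next
    show "?f ` {q \<in> {1..<p}. q \<notin> set T} \<subseteq> {x \<in> set T. T ! (p - 1) < x}"
    proof
      fix x assume "x \<in> ?f ` {q \<in> {1..<p}. q \<notin> set T}"
      then obtain q where q: "q \<in> {1..<p}" "q \<notin> set T" "x = T ! (q - 1)" by auto
      have qk: "q \<in> {1..k}" using q p by auto
      have "T ! (q - 1) \<noteq> q" using col_fix[OF C qk] q by simp
      then have "T ! (p - 1) < x" using col_dec[OF C qk p(1)] q by auto
      moreover have "x \<in> set T" using col_set_nth[OF C] qk q by auto
      ultimately show "x \<in> {x \<in> set T. T ! (p - 1) < x}" by simp
    qed
  qed
  have "inj_on ?f {q \<in> {1..<p}. q \<notin> set T}"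
    using col_inj[OF C] p by (intro inj_onI) auto
  then show ?thesis unfolding eq by (simp add: card_image)
qed

lemma col_good:
  assumes C: "pbw_column n k T" and kn: "k \<le> n"
  shows "goodS n k (set T)"
proof -
  have sub: "set T \<subseteq> {1..2*n}"
  proof
    fix x assume "x \<in> set T"
    then obtain p where "p \<in> {1..k}" "x = T ! (p - 1)" using col_set_nth[OF C] by blast
    then show "x \<in> {1..2*n}" using C unfolding pbw_column_def by blast
  qed
  have card: "card (set T) = k" using col_distinct[OF C] col_len[OF C] distinct_card by metis
  have "card {x \<in> set T. bar n i < x} < card {q \<in> {1..<i}. q \<notin> set T}"
    if i: "i \<in> {1..<k}" "i \<in> set T" "bar n i \<in> set T" for i
  proof -
    have ik: "i \<in> {1..k}" using i by auto
    have Ti: "T ! (i - 1) = i" using col_fix[OF C ik] i by simp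
    obtain i' where i': "i' \<in> {1..k}" "bar n i = T ! (i' - 1)" using col_set_nth[OF C] i by blast
    have c4: "\<forall>i\<in>{1..k}. \<forall>i'\<in>{1..k}. i < k \<and> T ! (i - 1) = i \<and> T ! (i' - 1) = bar n i \<longrightarrow> i' < i"
      using C unfolding pbw_column_def by blast
    have "i < k \<and> T ! (i - 1) = i \<and> T ! (i' - 1) = bar n i \<longrightarrow> i' < i"
      using c4 ik i'(1) by blast
    then have "i' < i" using i i' Ti by auto
    have bb: "k < bar n i" using i kn by (auto simp: bar_def)
    have ni': "T ! (i' - 1) \<noteq> i'" using bb i' by auto
    have ni'S: "i' \<notin> set T" using col_fix[OF C i'(1)] ni' by simp
    have "card {x \<in> set T. bar n i < x} = card {q \<in> {1..<i'}. q \<notin> set T}"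
      using col_count[OF C i'(1) ni'] i' by simp
    also have "\<dots> < card {q \<in> {1..<i}. q \<notin> set T}"
      using \<open>i' < i\<close> ni'S i' by (intro psubset_card_mono) auto
    finally show ?thesis .
  qed
  then show ?thesis unfolding goodS_def using sub card by blast
qed

lemma count_above_inj:
  assumes "finite (S::nat set)" "x \<in> S" "y \<in> S"
    "card {z \<in> S. x < z} = card {z \<in> S. y < z}"
  shows "x = y"
proof (rule ccontr)
  have *: False if "a \<in> S" "b \<in> S" "a < b" "card {z \<in> S. a < z} = card {z \<in> S. b < z}" for a b
  proof -
    have "card {z \<in> S. b < z} < card {z \<in> S. a < z}"
      using that assms(1) by (intro psubset_card_mono) auto
    then show False using that by simp
  qed
  assume "x \<noteq> y"
  then show False using * assms by (metis linorder_neqE_nat)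
qed

lemma col_unique:
  assumes C: "pbw_column n k T" and C': "pbw_column n k T'" and s: "set T = set T'"
  shows "T = T'"
proof (rule nth_equalityI)
  show "length T = length T'" using col_len[OF C] col_len[OF C'] by simp
next
  fix j assume jl: "j < length T"
  then have p: "Suc j \<in> {1..k}" using col_len[OF C] by auto
  show "T ! j = T' ! j"
  proof (cases "Suc j \<in> set T")
    case True
    then show ?thesis using col_fix[OF C p] col_fix[OF C' p] s by simp
  next
    case False
    then have n1: "T ! j \<noteq> Suc j" "T' ! j \<noteq> Suc j"
      using col_fix[OF C p] col_fix[OF C' p] s by auto
    have "card {x \<in> set T. T ! j < x} = card {x \<in> set T. T' ! j < x}"
      using col_count[OF C p] col_count[OF C' p] n1 s by simp
    moreover have "T ! j \<in> set T" "T' ! j \<in> set T"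
      using jl col_len[OF C] col_len[OF C'] s nth_mem by metis+
    ultimately show ?thesis using count_above_inj by blast
  qed
qed




lemma take_gt_set:
  fixes xs :: "nat list"
  assumes "sorted_wrt (>) xs" "j < length xs"
  shows "{x \<in> set xs. xs ! j < x} = set (take j xs)"
proof -
  have "x \<in> set (take j xs) \<longleftrightarrow> x \<in> set xs \<and> xs ! j < x" for x
  proof
    assume "x \<in> set (take j xs)"
    then obtain i where "i < j" "x = xs ! i" using assms(2)
      by (auto simp: in_set_conv_nth)
    then show "x \<in> set xs \<and> xs ! j < x" using assms
      by (metis sorted_wrt_nth_less nth_mem order.strict_trans)
  next
    assume "x \<in> set xs \<and> xs ! j < x"
    then obtain i where i: "i < length xs" "x = xs ! i" "xs ! j < x"
      by (auto simp: in_set_conv_nth)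
    have "i < j"
    proof (rule ccontr)
      assume "\<not> i < j"
      then have "i = j \<or> j < i" by auto
      then show False using i assms
        by (metis sorted_wrt_nth_less less_asym less_irrefl)
    qed
    then show "x \<in> set (take j xs)" using i
      by (metis in_set_conv_nth length_take min_less_iff_conj nth_take)
  qed
  then show ?thesis by auto
qed

definition mkcol :: "nat \<Rightarrow> nat \<Rightarrow> nat set \<Rightarrow> nat list" where
  "mkcol n k S = map (\<lambda>p. if p \<in> S then p
      else rev (sorted_list_of_set {x \<in> S. k < x}) ! card {q \<in> {1..<p}. q \<notin> S}) [1..<k+1]"

lemma mkcol_len: "length (mkcol n k S) = k" by (simp add: mkcol_def)

lemma mkcol_nth:
  assumes "p \<in> {1..k}"
  shows "mkcol n k S ! (p - 1) = (if p \<in> S then p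
      else rev (sorted_list_of_set {x \<in> S. k < x}) ! card {q \<in> {1..<p}. q \<notin> S})"
proof -
  have "p - 1 < length [1..<k+1]" using assms by auto
  moreover have "[1..<k+1] ! (p - 1) = p" using assms by (simp del: upt_Suc)
  ultimately show ?thesis unfolding mkcol_def by (simp del: upt_Suc)
qed

lemma mkcol_good:
  assumes G: "goodS n k S" and kn: "k \<le> n"
  shows "pbw_column n k (mkcol n k S) \<and> set (mkcol n k S) = S"
proof -
  define L where "L = {x \<in> S. k < x}"
  define Ls where "Ls = rev (sorted_list_of_set L)"
  define F where "F = {1..k} - S"
  define cnt where "cnt p = card {q \<in> {1..<p}. q \<notin> S}" for p
  define T where "T = mkcol n k S"
  have Sn: "S \<subseteq> {1..2*n}" and cS: "card S = k" using G unfolding goodS_def by auto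
  have fS: "finite S" using Sn finite_subset by blast
  have fL: "finite L" unfolding L_def using fS by simp
  have Tn: "T ! (p - 1) = (if p \<in> S then p else Ls ! cnt p)" if "p \<in> {1..k}" for p
    unfolding T_def Ls_def L_def cnt_def using mkcol_nth[OF that] by simp
  have lenT: "length T = k" unfolding T_def by (simp add: mkcol_len)
  have Su: "S = (S \<inter> {1..k}) \<union> L" unfolding L_def using Sn by auto
  have "card S = card (S \<inter> {1..k}) + card L"
    by (subst Su, rule card_Un_disjoint) (auto simp: L_def fS fL)
  moreover have "card F = k - card (S \<inter> {1..k})"
  proof -
    have "F = {1..k} - (S \<inter> {1..k})" unfolding F_def by auto
    then show ?thesis by (simp add: card_Diff_subset)
  qed
  moreover have "card (S \<inter> {1..k}) \<le> k" by (metis card_atLeastAtMost card_mono diff_Suc_1 finite_atLeastAtMost inf_le2)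
  ultimately have cLF: "card L = card F" using cS by simp
  have lenLs: "length Ls = card L" unfolding Ls_def by simp
  have sLs: "sorted_wrt (>) Ls" unfolding Ls_def
    by (simp add: sorted_wrt_rev strict_sorted_list_of_set)
  have dLs: "distinct Ls" unfolding Ls_def by simp
  have setLs: "set Ls = L" unfolding Ls_def using fL by simp
  have finF: "finite F" unfolding F_def by simp
  have cnt_lt: "cnt p < card F" if "p \<in> F" for p
  proof -
    have "{q \<in> {1..<p}. q \<notin> S} \<subseteq> F" using that unfolding F_def by auto
    moreover have "p \<notin> {q \<in> {1..<p}. q \<notin> S}" by simp
    ultimately have "{q \<in> {1..<p}. q \<notin> S} \<subset> F" using that by blast
    then show ?thesis unfolding cnt_def using psubset_card_mono[OF finF] by blast
  qed
  have cnt_mono: "cnt p1 < cnt p2" if "p1 \<in> F" "p2 \<in> F" "p1 < p2" for p1 p2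
  proof -
    have "{q \<in> {1..<p1}. q \<notin> S} \<subseteq> {q \<in> {1..<p2}. q \<notin> S}" using that by auto
    moreover have "p1 \<in> {q \<in> {1..<p2}. q \<notin> S}" "p1 \<notin> {q \<in> {1..<p1}. q \<notin> S}"
      using that unfolding F_def by auto
    ultimately have "{q \<in> {1..<p1}. q \<notin> S} \<subset> {q \<in> {1..<p2}. q \<notin> S}" by blast
    then show ?thesis unfolding cnt_def by (intro psubset_card_mono) auto
  qed
  have LsL: "Ls ! c \<in> L" if "c < card L" for c using that lenLs setLs nth_mem by metis
  have Ls_dec: "Ls ! b < Ls ! a" if "a < b" "b < card L" for a b
    using sorted_wrt_nth_less[OF sLs] that lenLs by auto
  have Ls_cnt: "card {x \<in> L. Ls ! c < x} = c" if "c < card L" for c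
  proof -
    have "{x \<in> L. Ls ! c < x} = set (take c Ls)" using take_gt_set[OF sLs] that lenLs setLs by auto
    then show ?thesis using dLs that lenLs by (simp add: distinct_card)
  qed
  have ent_big: "k < T ! (p - 1)" "T ! (p - 1) \<in> L" if "p \<in> {1..k}" "p \<notin> S" for p
  proof -
    have "p \<in> F" using that F_def by auto
    then have "cnt p < card L" using cnt_lt cLF by simp
    then have "Ls ! cnt p \<in> L" using LsL by blast
    then show "k < T ! (p - 1)" "T ! (p - 1) \<in> L" using Tn[OF that(1)] that L_def by auto
  qed
  have setT: "set T \<subseteq> S"
  proof
    fix x assume "x \<in> set T"
    then obtain j where "j < k" "x = T ! j" using lenT by (auto simp: in_set_conv_nth)
    then have p: "Suc j \<in> {1..k}" "x = T ! (Suc j - 1)" by auto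
    then show "x \<in> S" using Tn[OF p(1)] ent_big[OF p(1)] L_def by (cases "Suc j \<in> S") auto
  qed
  have injT: "T ! (p1 - 1) \<noteq> T ! (p2 - 1)" if "p1 \<in> {1..k}" "p2 \<in> {1..k}" "p1 < p2" for p1 p2
  proof (cases "p1 \<in> S")
    case True
    have a: "T ! (p1 - 1) = p1" using Tn[OF that(1)] True by simp
    show ?thesis
    proof (cases "p2 \<in> S")
      case True then show ?thesis using a Tn[OF that(2)] that(3) by simp
    next
      case False
      have "k < T ! (p2 - 1)" using ent_big(1)[OF that(2) False] .
      then show ?thesis using a that(1) by simp
    qed
  next
    case False
    show ?thesis
    proof (cases "p2 \<in> S")
      case True
      have a: "T ! (p2 - 1) = p2" using Tn[OF that(2)] True by simp
      have "k < T ! (p1 - 1)" using ent_big(1)[OF that(1) False] .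
      then show ?thesis using a that(2) by simp
    next
      case F2: False
      have "p1 \<in> F" "p2 \<in> F" using False F2 that F_def by auto
      then have "cnt p1 < cnt p2" "cnt p2 < card L" using cnt_mono cnt_lt cLF that by auto
      then show ?thesis using Ls_dec Tn that False F2 by force
    qed
  qed
  have dT: "distinct T"
  proof -
    have "\<forall>i<length T. \<forall>j<length T. i < j \<longrightarrow> T ! i \<noteq> T ! j"
      using injT[of "Suc _" "Suc _"] lenT by auto
    then show ?thesis unfolding distinct_conv_nth by (metis linorder_neqE_nat)
  qed
  have setTS: "set T = S"
    using setT dT lenT cS by (metis card_subset_eq distinct_card fS)
  have c1: "\<forall>i\<in>{1..k}. T ! (i - 1) \<in> {1..2*n}" using setT Sn lenT
    by (metis One_nat_def Suc_pred atLeastAtMost_iff diff_less le_eq_less_or_eq nth_mem subsetD zero_less_one less_le_trans)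
  have c2: "\<forall>i\<in>{1..k}. T ! (i - 1) \<le> k \<longrightarrow> T ! (i - 1) = i"
    using Tn ent_big by (metis not_le)
  have c3: "\<forall>i1\<in>{1..k}. \<forall>i2\<in>{1..k}. i1 < i2 \<and> T ! (i1 - 1) \<noteq> i1 \<longrightarrow> T ! (i1 - 1) > T ! (i2 - 1)"
  proof (intro ballI impI)
    fix i1 i2 assume i: "i1 \<in> {1..k}" "i2 \<in> {1..k}" "i1 < i2 \<and> T ! (i1 - 1) \<noteq> i1"
    then have n1: "i1 \<notin> S" using Tn by auto
    then have "i1 \<in> F" using i F_def by auto
    show "T ! (i1 - 1) > T ! (i2 - 1)"
    proof (cases "i2 \<in> S")
      case True then show ?thesis using Tn[OF i(2)] ent_big[OF i(1) n1] i by auto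
    next
      case False
      then have "i2 \<in> F" using i F_def by auto
      then have "cnt i1 < cnt i2" "cnt i2 < card L" using cnt_mono cnt_lt cLF i \<open>i1 \<in> F\<close> by auto
      then show ?thesis using Ls_dec Tn i n1 False by force
    qed
  qed
  have c4: "\<forall>i\<in>{1..k}. \<forall>i'\<in>{1..k}. i < k \<and> T ! (i - 1) = i \<and> T ! (i' - 1) = bar n i \<longrightarrow> i' < i"
  proof (intro ballI impI)
    fix i i' assume i: "i \<in> {1..k}" "i' \<in> {1..k}" "i < k \<and> T ! (i - 1) = i \<and> T ! (i' - 1) = bar n i"
    have iS: "i \<in> S" using i ent_big[OF i(1)] by force
    have bb: "k < bar n i" using i kn by (auto simp: bar_def)
    have i'S: "i' \<notin> S" using Tn[OF i(2)] i bb by auto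
    have bS: "bar n i \<in> S" using setTS i lenT
      by (metis c1 nth_mem One_nat_def Suc_pred atLeastAtMost_iff diff_less less_le_trans zero_less_one le_eq_less_or_eq)
    have "card {x \<in> S. bar n i < x} < cnt i"
      using G iS bS i unfolding goodS_def cnt_def by auto
    moreover have "card {x \<in> S. bar n i < x} = cnt i'"
    proof -
      have "i' \<in> F" using i'S i F_def by auto
      then have cl: "cnt i' < card L" using cnt_lt cLF by simp
      have "bar n i = Ls ! cnt i'" using Tn[OF i(2)] i'S i by simp
      moreover have "{x \<in> S. bar n i < x} = {x \<in> L. bar n i < x}" using bb L_def by auto
      ultimately show ?thesis using Ls_cnt[OF cl] by simp
    qed
    ultimately have "cnt i' < cnt i" by simp
    show "i' < i"
    proof (rule ccontr)
      assume "\<not> i' < i"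
      then have "{q \<in> {1..<i}. q \<notin> S} \<subseteq> {q \<in> {1..<i'}. q \<notin> S}" by auto
      then have "cnt i \<le> cnt i'" unfolding cnt_def by (intro card_mono) auto
      then show False using \<open>cnt i' < cnt i\<close> by simp
    qed
  qed
  have "pbw_column n k T" unfolding pbw_column_def using lenT c1 c2 c3 c4 by blast
  then show ?thesis using setTS T_def by simp
qed




definition setS :: "nat \<Rightarrow> nat set \<times> nat set \<Rightarrow> nat set" where
  "setS n M = (case M of (I2, I1) \<Rightarrow> I1 \<union> bar n ` I2)"

lemma bar_range: "i \<in> {1..n} \<Longrightarrow> n < bar n i \<and> bar n i \<le> 2*n"
  by (auto simp: bar_def)

lemma bar_bar: "x \<in> {1..2*n} \<Longrightarrow> bar n (bar n x) = x"
  by (auto simp: bar_def)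

lemma bar_inj: "inj_on (bar n) {1..2*n}"
  by (metis bar_bar inj_on_inverseI)

lemma bar_less: "i \<in> {1..n} \<Longrightarrow> j \<in> {1..n} \<Longrightarrow> bar n i < bar n j \<longleftrightarrow> j < i"
  by (auto simp: bar_def)

lemma setS_recover:
  assumes "I1 \<subseteq> {1..n}" "I2 \<subseteq> {1..n}"
  shows "setS n (I2, I1) \<inter> {1..n} = I1" "{i \<in> {1..n}. bar n i \<in> setS n (I2, I1)} = I2"
proof -
  have hb: "n < bar n j" if "j \<in> I2" for j using bar_range[of j n] that assms(2) by blast
  show "setS n (I2, I1) \<inter> {1..n} = I1" using assms(1) unfolding setS_def by (auto dest: hb)
  show "{i \<in> {1..n}. bar n i \<in> setS n (I2, I1)} = I2"
  proof safe
    fix i assume i: "i \<in> {1..n}" "bar n i \<in> setS n (I2, I1)"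
    then have "bar n i \<notin> I1" using bar_range[of i n] i(1) assms(1) by auto
    then obtain j where "j \<in> I2" "bar n i = bar n j" using i unfolding setS_def by auto
    then have "j \<in> {1..n}" "bar n i = bar n j" using assms(2) by blast+
    then have "i = j" using i(1) by (auto simp: bar_def)
    then show "i \<in> I2" using \<open>j \<in> I2\<close> by simp
  next
    fix i assume "i \<in> I2" then show "i \<in> {1..n}" "bar n i \<in> setS n (I2, I1)"
      using assms unfolding setS_def by auto
  qed
qed

lemma setS_card:
  assumes "I1 \<subseteq> {1..n}" "I2 \<subseteq> {1..n}"
  shows "card (setS n (I2, I1)) = card I1 + card I2"
proof -
  have fin: "finite I1" "finite I2" using assms finite_subset by blast+
  have "card (bar n ` I2) = card I2"
  proof -
    have "I2 \<subseteq> {1..2*n}" using assms(2) by auto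
    then show ?thesis using inj_on_subset[OF bar_inj] card_image by blast
  qed
  moreover have "I1 \<inter> bar n ` I2 = {}"
  proof -
    have hb: "n < bar n j" if "j \<in> I2" for j using bar_range[of j n] that assms(2) by blast
    {
      fix j assume j: "j \<in> I2" "bar n j \<in> I1"
      have "bar n j \<in> {1..n}" using assms(1) j(2) by blast
      then have False using hb[OF j(1)] by simp
    }
    then show ?thesis by blast
  qed
  ultimately show ?thesis unfolding setS_def using fin by (simp add: card_Un_disjoint)
qed

lemma setS_sub:
  assumes "I1 \<subseteq> {1..n}" "I2 \<subseteq> {1..n}"
  shows "setS n (I2, I1) \<subseteq> {1..2*n}"
proof
  fix x assume "x \<in> setS n (I2, I1)"
  then consider "x \<in> I1" | j where "j \<in> I2" "x = bar n j" unfolding setS_def by auto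
  then show "x \<in> {1..2*n}"
  proof cases
    case 1 then show ?thesis using assms(1) by auto
  next
    case 2
    then have "j \<in> {1..n}" using assms(2) by blast
    then show ?thesis using bar_range[of j n] 2 by auto
  qed
qed

lemma L1:
  fixes I1 I2 :: "nat set"
  assumes I: "I1 \<subseteq> {1..n}" "I2 \<subseteq> {1..n}" and g: "g \<in> I1 \<inter> I2"
  shows "card {x \<in> I1 \<inter> I2. x \<le> g} \<le> card {x \<in> {1..n} - (I1 \<union> I2). x \<le> g}
     \<longleftrightarrow> card {x \<in> I1. x \<le> g} + card {x \<in> I2. x \<le> g} \<le> g"
proof -
  define A1 where "A1 = {x \<in> I1. x \<le> g}"
  define A2 where "A2 = {x \<in> I2. x \<le> g}"
  have gn: "g \<le> n" using g I by auto
  have A: "A1 \<subseteq> {1..g}" "A2 \<subseteq> {1..g}" using I unfolding A1_def A2_def by auto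
  have f: "finite A1" "finite A2" using A finite_subset by blast+
  have e1: "{x \<in> I1 \<inter> I2. x \<le> g} = A1 \<inter> A2" unfolding A1_def A2_def by auto
  have e2: "{x \<in> {1..n} - (I1 \<union> I2). x \<le> g} = {1..g} - (A1 \<union> A2)"
    unfolding A1_def A2_def using gn by auto
  have c2: "card ({1..g} - (A1 \<union> A2)) = g - card (A1 \<union> A2)"
    using A by (simp add: card_Diff_subset f)
  have u: "card (A1 \<union> A2) \<le> g" using A by (metis card_atLeastAtMost card_mono diff_Suc_1 finite_atLeastAtMost le_sup_iff)
  have "card A1 + card A2 = card (A1 \<union> A2) + card (A1 \<inter> A2)" using f card_Un_Int by blast
  moreover have "card {x \<in> I1 \<inter> I2. x \<le> g} = card (A1 \<inter> A2)" by (rule arg_cong[where f=card, OF e1])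
  moreover have "card {x \<in> {1..n} - (I1 \<union> I2). x \<le> g} = g - card (A1 \<union> A2)" using e2 c2 by simp
  moreover have "card {x \<in> I1. x \<le> g} = card A1" "card {x \<in> I2. x \<le> g} = card A2"
    by (simp_all add: A1_def A2_def)
  ultimately show ?thesis using u by linarith
qed

lemma L2:
  fixes I1 I2 :: "nat set"
  assumes I: "I1 \<subseteq> {1..n}" "I2 \<subseteq> {1..n}" "card I1 + card I2 = k" and g: "k \<le> g"
  shows "card {x \<in> I1. x \<le> g} + card {x \<in> I2. x \<le> g} \<le> g"
proof -
  have f: "finite I1" "finite I2" using I finite_subset by blast+
  have "card {x \<in> I1. x \<le> g} \<le> card I1" "card {x \<in> I2. x \<le> g} \<le> card I2"
    using f by (auto intro: card_mono)
  then show ?thesis using I g by linarith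
qed

lemma L3:
  assumes I: "I1 \<subseteq> {1..n}" "I2 \<subseteq> {1..n}" and i: "i \<in> {1..n}"
  shows "(i \<in> setS n (I2, I1) \<and> bar n i \<in> setS n (I2, I1)) \<longleftrightarrow> i \<in> I1 \<inter> I2"
  using setS_recover[OF I] i by blast

lemma L4:
  fixes I1 I2 :: "nat set"
  assumes I: "I1 \<subseteq> {1..n}" "I2 \<subseteq> {1..n}" and i: "i \<in> I1 \<inter> I2"
  shows "card {x \<in> setS n (I2, I1). bar n i < x} < card {q \<in> {1..<i}. q \<notin> setS n (I2, I1)}
     \<longleftrightarrow> card {x \<in> I1. x \<le> i} + card {x \<in> I2. x \<le> i} \<le> i"
proof -
  let ?S = "setS n (I2, I1)"
  have iN: "i \<in> {1..n}" using i I by auto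
  have f: "finite I1" "finite I2" using I finite_subset by blast+
  define a where "a = card {j \<in> I2. j < i}"
  define b where "b = card {x \<in> I1. x < i}"
  have e1: "{x \<in> ?S. bar n i < x} = bar n ` {j \<in> I2. j < i}"
  proof safe
    fix x assume x: "x \<in> ?S" "bar n i < x"
    have "x \<notin> I1" using x I bar_range[OF iN] by auto
    then obtain j where j: "j \<in> I2" "x = bar n j" using x unfolding setS_def by auto
    then have "j < i" using x bar_less[OF iN] I by auto
    then show "x \<in> bar n ` {j \<in> I2. j < i}" using j by auto
  next
    fix j assume "j \<in> I2" "j < i"
    then show "bar n j \<in> ?S" "bar n i < bar n j" using bar_less[OF iN] I unfolding setS_def by auto
  qed
  have ca: "card {x \<in> ?S. bar n i < x} = a" unfolding e1 a_def
  proof -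
    have "{j \<in> I2. j < i} \<subseteq> {1..2*n}" using I(2) by auto
    then have "inj_on (bar n) {j \<in> I2. j < i}" using inj_on_subset[OF bar_inj] by blast
    then show "card (bar n ` {j \<in> I2. j < i}) = card {j \<in> I2. j < i}" by (rule card_image)
  qed
  have e2: "{q \<in> {1..<i}. q \<notin> ?S} = {1..<i} - {x \<in> I1. x < i}"
    using setS_recover[OF I] iN by auto
  have cb: "card {q \<in> {1..<i}. q \<notin> ?S} = (i - 1) - b" unfolding e2 b_def
    using I by (subst card_Diff_subset) auto
  have bi: "b \<le> i - 1" unfolding b_def using I
    by (metis (no_types, lifting) card_atLeastLessThan card_mono finite_atLeastLessThan mem_Collect_eq subset_iff atLeastLessThan_iff atLeastAtMost_iff)
  have c1: "card {x \<in> I1. x \<le> i} = Suc b"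
  proof -
    have "{x \<in> I1. x \<le> i} = insert i {x \<in> I1. x < i}" using i by auto
    then show ?thesis unfolding b_def using f by simp
  qed
  have c2: "card {x \<in> I2. x \<le> i} = Suc a"
  proof -
    have "{x \<in> I2. x \<le> i} = insert i {x \<in> I2. x < i}" using i by auto
    then show ?thesis unfolding a_def using f by simp
  qed
  show ?thesis unfolding ca cb c1 c2 using bi iN by auto
qed

lemma minor_good:
  assumes M: "(I2, I1) \<in> minors n k" and kn: "k \<le> n"
  shows "reverse_admissible n (I2, I1) \<longleftrightarrow> goodS n k (setS n (I2, I1))"
proof -
  have I: "I1 \<subseteq> {1..n}" "I2 \<subseteq> {1..n}" "card I1 + card I2 = k" using M unfolding minors_def by auto
  let ?S = "setS n (I2, I1)"
  have gS: "goodS n k ?S \<longleftrightarrow> (\<forall>i\<in>{1..<k}. i \<in> ?S \<and> bar n i \<in> ?S \<longrightarrow>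
        card {x \<in> ?S. bar n i < x} < card {q \<in> {1..<i}. q \<notin> ?S})"
    unfolding goodS_def using setS_sub[OF I(1,2)] setS_card[OF I(1,2)] I(3) by auto
  have "reverse_admissible n (I2, I1) \<longleftrightarrow>
     (\<forall>g\<in>I1 \<inter> I2. card {x \<in> I1. x \<le> g} + card {x \<in> I2. x \<le> g} \<le> g)"
    using RA_iff[OF I(1,2)] L1[OF I(1,2)] by auto
  also have "\<dots> \<longleftrightarrow> (\<forall>g\<in>I1 \<inter> I2. g < k \<longrightarrow> card {x \<in> I1. x \<le> g} + card {x \<in> I2. x \<le> g} \<le> g)"
    using L2[OF I] by (meson not_less)
  also have "\<dots> \<longleftrightarrow> (\<forall>i\<in>{1..<k}. i \<in> ?S \<and> bar n i \<in> ?S \<longrightarrow>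
        card {x \<in> ?S. bar n i < x} < card {q \<in> {1..<i}. q \<notin> ?S})"
  proof
    assume H: "\<forall>g\<in>I1 \<inter> I2. g < k \<longrightarrow> card {x \<in> I1. x \<le> g} + card {x \<in> I2. x \<le> g} \<le> g"
    show "\<forall>i\<in>{1..<k}. i \<in> ?S \<and> bar n i \<in> ?S \<longrightarrow>
        card {x \<in> ?S. bar n i < x} < card {q \<in> {1..<i}. q \<notin> ?S}"
    proof (intro ballI impI)
      fix i assume i: "i \<in> {1..<k}" "i \<in> ?S \<and> bar n i \<in> ?S"
      then have "i \<in> I1 \<inter> I2" using L3[OF I(1,2), of i] kn by auto
      then show "card {x \<in> ?S. bar n i < x} < card {q \<in> {1..<i}. q \<notin> ?S}"
        using H L4[OF I(1,2)] i by auto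
    qed
  next
    assume H: "\<forall>i\<in>{1..<k}. i \<in> ?S \<and> bar n i \<in> ?S \<longrightarrow>
        card {x \<in> ?S. bar n i < x} < card {q \<in> {1..<i}. q \<notin> ?S}"
    show "\<forall>g\<in>I1 \<inter> I2. g < k \<longrightarrow> card {x \<in> I1. x \<le> g} + card {x \<in> I2. x \<le> g} \<le> g"
    proof (intro ballI impI)
      fix g assume g: "g \<in> I1 \<inter> I2" "g < k"
      then have "g \<in> {1..<k}" "g \<in> ?S \<and> bar n g \<in> ?S" using I L3[OF I(1,2), of g] by auto
      then show "card {x \<in> I1. x \<le> g} + card {x \<in> I2. x \<le> g} \<le> g"
        using H L4[OF I(1,2) g(1)] by auto
    qed
  qed
  finally show ?thesis using gS by simp
qed




lemma setS_of_set:
  assumes "S \<subseteq> {1..2*n}"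
  shows "setS n ({i \<in> {1..n}. bar n i \<in> S}, S \<inter> {1..n}) = S"
proof safe
  fix x assume "x \<in> setS n ({i \<in> {1..n}. bar n i \<in> S}, S \<inter> {1..n})"
  then show "x \<in> S" unfolding setS_def by auto
next
  fix x assume x: "x \<in> S"
  show "x \<in> setS n ({i \<in> {1..n}. bar n i \<in> S}, S \<inter> {1..n})"
  proof (cases "x \<le> n")
    case True then show ?thesis using x assms unfolding setS_def by auto
  next
    case False
    have xr: "x \<in> {1..2*n}" using x assms by auto
    then have "bar n x \<in> {1..n}" using False by (auto simp: bar_def)
    moreover have "bar n (bar n x) = x" using bar_bar[OF xr] .
    ultimately have "x \<in> bar n ` {i \<in> {1..n}. bar n i \<in> S}"
      using x by (intro image_eqI[of _ _ "bar n x"]) auto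
    then show ?thesis unfolding setS_def by simp
  qed
qed

theorem proposition4p10:
  fixes n k :: nat
  assumes "n \<ge> 1" and "1 \<le> k" and "k \<le> n"
  shows "\<exists>f. bij_betw f (rev_adm_minors n k) (pbw_columns n k) \<and>
             (\<forall>M \<in> rev_adm_minors n k. column_weight n (f M) = minor_weight n M)"
proof -
  have kn: "k \<le> n" using assms by simp
  define f where "f M = mkcol n k (setS n M)" for M
  have good: "goodS n k (setS n M)" if "M \<in> rev_adm_minors n k" for M
    using that minor_good[OF _ kn] unfolding rev_adm_minors_def by (cases M) auto
  have fcol: "pbw_column n k (f M)" "set (f M) = setS n M" if "M \<in> rev_adm_minors n k" for M
    using mkcol_good[OF good[OF that] kn] unfolding f_def by auto
  have Isub: "fst M \<subseteq> {1..n}" "snd M \<subseteq> {1..n}" if "M \<in> rev_adm_minors n k" for M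
    using that unfolding rev_adm_minors_def minors_def by auto
  have inj: "inj_on f (rev_adm_minors n k)"
  proof (rule inj_onI)
    fix M M' assume M: "M \<in> rev_adm_minors n k" and M': "M' \<in> rev_adm_minors n k" and e: "f M = f M'"
    then have eS: "setS n M = setS n M'" using fcol by metis
    obtain I2 I1 where MM: "M = (I2, I1)" by (cases M)
    obtain J2 J1 where MM': "M' = (J2, J1)" by (cases M')
    have I: "I1 \<subseteq> {1..n}" "I2 \<subseteq> {1..n}" using Isub[OF M] MM by auto
    have J: "J1 \<subseteq> {1..n}" "J2 \<subseteq> {1..n}" using Isub[OF M'] MM' by auto
    have e2: "setS n (I2, I1) = setS n (J2, J1)" using eS MM MM' by simp
    have "I1 = J1" using setS_recover(1)[OF I] setS_recover(1)[OF J] e2 by simp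
    moreover have "I2 = J2" using setS_recover(2)[OF I] setS_recover(2)[OF J] e2 by simp
    ultimately show "M = M'" using MM MM' by simp
  qed
  have img: "f ` rev_adm_minors n k = pbw_columns n k"
  proof
    show "f ` rev_adm_minors n k \<subseteq> pbw_columns n k" using fcol unfolding pbw_columns_def by auto
  next
    show "pbw_columns n k \<subseteq> f ` rev_adm_minors n k"
    proof
      fix T assume "T \<in> pbw_columns n k"
      then have C: "pbw_column n k T" unfolding pbw_columns_def by simp
      let ?S = "set T"
      have G: "goodS n k ?S" using col_good[OF C kn] .
      have Ssub: "?S \<subseteq> {1..2*n}" and cS: "card ?S = k" using G unfolding goodS_def by auto
      define M where "M = ({i \<in> {1..n}. bar n i \<in> ?S}, ?S \<inter> {1..n})"
      have sM: "setS n M = ?S" unfolding M_def using setS_of_set[OF Ssub] .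
      have MI: "?S \<inter> {1..n} \<subseteq> {1..n}" "{i \<in> {1..n}. bar n i \<in> ?S} \<subseteq> {1..n}" by auto
      have "card (?S \<inter> {1..n}) + card {i \<in> {1..n}. bar n i \<in> ?S} = k"
        using setS_card[OF MI] sM cS unfolding M_def by simp
      then have Mm: "M \<in> minors n k" unfolding M_def minors_def by auto
      then have MR: "M \<in> rev_adm_minors n k"
        using minor_good[OF _ kn] G sM unfolding rev_adm_minors_def M_def by auto
      have "f M = T" using col_unique[OF fcol(1)[OF MR] C] fcol(2)[OF MR] sM by simp
      then show "T \<in> f ` rev_adm_minors n k" using MR by blast
    qed
  qed
  have w: "column_weight n (f M) = minor_weight n M" if M: "M \<in> rev_adm_minors n k" for M
  proof
    fix j
    obtain I2 I1 where MM: "M = (I2, I1)" by (cases M)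
    have I: "I1 \<subseteq> {1..n}" "I2 \<subseteq> {1..n}" using Isub[OF M] MM by auto
    have s: "set (f M) = setS n (I2, I1)" using fcol(2)[OF M] MM by simp
    show "column_weight n (f M) j = minor_weight n M j"
    proof (cases "j \<in> {1..n}")
      case True
      have "j \<in> set (f M) \<longleftrightarrow> j \<in> I1" using setS_recover(1)[OF I] s True by blast
      moreover have "bar n j \<in> set (f M) \<longleftrightarrow> j \<in> I2" using setS_recover(2)[OF I] s True by blast
      ultimately show ?thesis unfolding column_weight_def minor_weight_def MM using True by simp
    next
      case False
      then show ?thesis unfolding column_weight_def minor_weight_def MM by simp
    qed
  qed
  show ?thesis by (intro exI[of _ f]) (simp add: bij_betw_def inj img w)
qed


end
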